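(* Let $k$ be an integer with $1 \le k \leq 3$. If a non-empty graph $T$ is a $\mathsf{TJ}_k$-graph and $T$ does not contain a diamond ($K_4$ minus one edge) as an induced subgraph, then $T$ is a maximum $\mathsf{TJ}_k$-graph.
   Context: Graphs are finite, simple, undirected; non-empty means having at least one vertex. $\mathsf{TJ}_k(G)$ is the graph on the cliques of $G$ of size $k$ where $C, C'$ are adjacent iff $|C \setminus C'| = |C' \setminus C| = 1$. $T$ is a $\mathsf{TJ}_k$-graph if $T \cong \mathsf{TJ}_k(G)$ for some graph $G$, and a maximum $\mathsf{TJ}_k$-graph if $T \cong \mathsf{TJ}_k(G)$ for some $G$ with $\omega(G) = k$ ($\omega$ = maximum clique size). *)

theory Defs
  imports Main
begin

definition graph :: "'a set \<Rightarrow> 'a set set \<Rightarrow> bool" where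
  "graph V E \<longleftrightarrow> finite V \<and> (\<forall>e\<in>E. \<exists>u v. u \<noteq> v \<and> e = {u, v} \<and> u \<in> V \<and> v \<in> V)"

definition clique :: "'a set \<Rightarrow> 'a set set \<Rightarrow> 'a set \<Rightarrow> bool" where
  "clique V E C \<longleftrightarrow> C \<subseteq> V \<and> (\<forall>u\<in>C. \<forall>v\<in>C. u \<noteq> v \<longrightarrow> {u, v} \<in> E)"

definition k_cliques :: "nat \<Rightarrow> 'a set \<Rightarrow> 'a set set \<Rightarrow> 'a set set" where
  "k_cliques k V E = {C. clique V E C \<and> card C = k}"

definition clique_number :: "'a set \<Rightarrow> 'a set set \<Rightarrow> nat" where
  "clique_number V E = Max {card C | C. clique V E C}"

definition TJ_vertices :: "nat \<Rightarrow> 'a set \<Rightarrow> 'a set set \<Rightarrow> 'a set set" where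
  "TJ_vertices k V E = k_cliques k V E"

definition TJ_edges :: "nat \<Rightarrow> 'a set \<Rightarrow> 'a set set \<Rightarrow> 'a set set set" where
  "TJ_edges k V E = {{C, C'} | C C'. C \<in> k_cliques k V E \<and> C' \<in> k_cliques k V E \<and>
                        card (C - C') = 1 \<and> card (C' - C) = 1}"

definition graph_iso :: "'a set \<Rightarrow> 'a set set \<Rightarrow> 'b set \<Rightarrow> 'b set set \<Rightarrow> bool" where
  "graph_iso V1 E1 V2 E2 \<longleftrightarrow> (\<exists>f. bij_betw f V1 V2 \<and>
      (\<forall>u\<in>V1. \<forall>v\<in>V1. {u, v} \<in> E1 \<longleftrightarrow> {f u, f v} \<in> E2))"

text \<open>T is a TJ_k-graph if T is isomorphic to TJ_k(G) for some finite simple graph G.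
  Since every finite graph is isomorphic to one on natural numbers, G ranges over
  graphs with vertices in nat.\<close>
definition is_TJ_graph :: "nat \<Rightarrow> 'a set \<Rightarrow> 'a set set \<Rightarrow> bool" where
  "is_TJ_graph k V E \<longleftrightarrow> (\<exists>(GV :: nat set) GE. graph GV GE \<and>
      graph_iso V E (TJ_vertices k GV GE) (TJ_edges k GV GE))"

definition is_max_TJ_graph :: "nat \<Rightarrow> 'a set \<Rightarrow> 'a set set \<Rightarrow> bool" where
  "is_max_TJ_graph k V E \<longleftrightarrow> (\<exists>(GV :: nat set) GE. graph GV GE \<and> clique_number GV GE = k \<and>
      graph_iso V E (TJ_vertices k GV GE) (TJ_edges k GV GE))"

definition has_induced_diamond :: "'a set \<Rightarrow> 'a set set \<Rightarrow> bool" where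
  "has_induced_diamond V E \<longleftrightarrow> (\<exists>a b c d. a \<in> V \<and> b \<in> V \<and> c \<in> V \<and> d \<in> V \<and>
      distinct [a, b, c, d] \<and>
      {a, b} \<in> E \<and> {a, c} \<in> E \<and> {a, d} \<in> E \<and> {b, c} \<in> E \<and> {b, d} \<in> E \<and> {c, d} \<notin> E)"

end

theory Submission
  imports Defs "HOL-Library.Nat_Bijection"
begin


definition adj :: "'a set \<Rightarrow> 'a set \<Rightarrow> bool" where
  "adj C D \<longleftrightarrow> card (C - D) = 1 \<and> card (D - C) = 1"

lemma adjI: "A - B = {x} \<Longrightarrow> B - A = {y} \<Longrightarrow> adj A B"
  by (simp add: adj_def)

lemma adj_sym: "adj A B = adj B A"
  by (auto simp: adj_def)

lemma clique_subset: "clique V E K \<Longrightarrow> C \<subseteq> K \<Longrightarrow> clique V E C"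
  unfolding clique_def by blast

lemma TJ_edges_iff:
  assumes "C \<in> k_cliques k V E" "D \<in> k_cliques k V E"
  shows "{C, D} \<in> TJ_edges k V E \<longleftrightarrow> adj C D"
  using assms unfolding TJ_edges_def adj_def by (auto simp: doubleton_eq_iff)

lemma card1_diff:
  assumes "finite K" "C \<subseteq> K" "D \<subseteq> K" "card K = Suc k" "card C = k" "card D = k" "C \<noteq> D"
  shows "card (C - D) = 1"
proof -
  have fD: "finite D" "finite C" using assms finite_subset by auto
  have "card (K - D) = 1" using assms fD by (simp add: card_Diff_subset)
  moreover have "C - D \<subseteq> K - D" using assms by auto
  ultimately have le: "card (C - D) \<le> 1" using assms by (metis card_mono finite_Diff)
  have "C - D \<noteq> {}"
  proof
    assume "C - D = {}"
    then have "C \<subseteq> D" by auto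
    then show False using assms fD card_subset_eq by metis
  qed
  then have "card (C - D) \<noteq> 0" using fD by auto
  then show ?thesis using le by linarith
qed

locale tjctx =
  fixes GV :: "nat set" and GE :: "nat set set" and k :: nat
  assumes gr: "graph GV GE" and k2: "2 \<le> k" and k3: "k \<le> 3"
  and nodiam: "\<And>a b c d. a \<in> k_cliques k GV GE \<Longrightarrow> b \<in> k_cliques k GV GE \<Longrightarrow>
     c \<in> k_cliques k GV GE \<Longrightarrow> d \<in> k_cliques k GV GE \<Longrightarrow> distinct [a,b,c,d] \<Longrightarrow>
     adj a b \<Longrightarrow> adj a c \<Longrightarrow> adj a d \<Longrightarrow> adj b c \<Longrightarrow> adj b d \<Longrightarrow> adj c d"
begin

abbreviation "KC \<equiv> k_cliques k GV GE"
abbreviation "KS \<equiv> k_cliques (Suc k) GV GE"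

lemma finGV: "finite GV" using gr by (simp add: graph_def)

lemma kcl_mem: "C \<in> k_cliques m GV GE \<longleftrightarrow> clique GV GE C \<and> card C = m"
  by (simp add: k_cliques_def)

lemma kcl_fin: "C \<in> k_cliques m GV GE \<Longrightarrow> finite C \<and> C \<subseteq> GV"
  using finGV by (auto simp: k_cliques_def clique_def intro: finite_subset)

lemma edge_sub: "e \<in> GE \<Longrightarrow> e \<subseteq> GV"
  using gr by (auto simp: graph_def)

lemma L:
  assumes K: "K \<in> KS" and CK: "C \<subseteq> K" and C: "C \<in> KC" and D: "D \<in> KC" and a: "adj C D"
  shows "D \<subseteq> K"
proof (rule ccontr)
  assume nsub: "\<not> D \<subseteq> K"
  have fK: "finite K" and cK: "card K = Suc k" and clK: "clique GV GE K"
    using K kcl_fin kcl_mem by auto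
  have cC: "card C = k" and fC: "finite C" using C kcl_fin kcl_mem by auto
  obtain u where u: "C - D = {u}" using a unfolding adj_def by (auto simp: card_1_singleton_iff)
  obtain e where e: "D - C = {e}" using a unfolding adj_def by (auto simp: card_1_singleton_iff)
  have Deq: "D = insert e (C - {u})" using u e by blast
  have eK: "e \<notin> K" using nsub Deq CK by blast
  have "card (K - C) = 1" using cK cC CK fC by (simp add: card_Diff_subset)
  then obtain w where w: "K - C = {w}" by (auto simp: card_1_singleton_iff)
  have Keq: "K = insert w C" using w CK by blast
  have uC: "u \<in> C" "u \<notin> D" using u by auto
  have "card (C - {u}) = k - 1" using uC fC cC by simp
  then have "C - {u} \<noteq> {}" using k2 by (intro notI) simp
  then obtain t where t: "t \<in> C" "t \<noteq> u" by blast
  have wC: "w \<notin> C" using w by auto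
  have eC: "e \<notin> C" "e \<in> D" using e by auto
  have we: "w \<noteq> e" using Keq eK by auto
  define C1 where "C1 = K - {u}"
  define C2 where "C2 = K - {t}"
  have uK: "u \<in> K" "t \<in> K" using uC t CK by auto
  have C1: "C1 \<in> KC" unfolding C1_def kcl_mem using clK uK fK cK
    by (auto intro: clique_subset)
  have C2: "C2 \<in> KC" unfolding C2_def kcl_mem using clK uK fK cK
    by (auto intro: clique_subset)
  have a1: "adj C C1"
    by (rule adjI[of _ _ u w]) (use uC wC in \<open>auto simp: C1_def Keq\<close>)
  have a2: "adj C C2"
    by (rule adjI[of _ _ t w]) (use t wC in \<open>auto simp: C2_def Keq\<close>)
  have a3: "adj C1 D"
    by (rule adjI[of _ _ w e]) (use uC wC eC we in \<open>auto simp: C1_def Keq Deq\<close>)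
  have a4: "adj C1 C2"
    by (rule adjI[of _ _ t u]) (use uC t wC in \<open>auto simp: C1_def C2_def Keq\<close>)
  have na: "\<not> adj D C2"
  proof
    assume "adj D C2"
    then have c1: "card (D - C2) = 1" by (simp add: adj_def)
    have "{t, e} \<subseteq> D - C2" using t uC eC eK Deq by (auto simp: C2_def)
    moreover have "t \<noteq> e" using t eC by blast
    then have "card {t, e} = 2" by simp
    moreover have "finite (D - C2)" using D kcl_fin by auto
    ultimately have "2 \<le> card (D - C2)" by (metis card_mono)
    then show False using c1 by simp
  qed
  have dist: "distinct [C, C1, D, C2]"
    using uC t wC eC eK we by (auto simp: C1_def C2_def Keq)
  show False using nodiam[OF C C1 D C2 dist a1 a a2 a3 a4] na by simp
qed

end


context tjctx
begin

definition "NF = {C \<in> KC. \<exists>K\<in>KS. C \<subseteq> K}"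
definition "FR = {C \<in> KC. \<not> (\<exists>K\<in>KS. C \<subseteq> K)}"
definition "E1 = {e \<in> GE. \<not> (\<exists>K\<in>KS. e \<subseteq> K)}"
definition "N = Suc (Max (insert 0 GV))"
definition "g S i = N + prod_encode (set_encode S, i)"
definition "Z K = (\<lambda>i. g K i) ` {..<k-1}"
definition "KCof C = (THE K. K \<in> KS \<and> C \<subseteq> K)"
definition "phi C = (if C \<in> NF then insert (g C k) (Z (KCof C)) else C)"
definition "pairs S = {{a, b} | a b. a \<in> S \<and> b \<in> S \<and> a \<noteq> b}"
definition "V2 = GV \<union> \<Union> (phi ` NF)"
definition "E2 = E1 \<union> \<Union> (pairs ` phi ` NF)"

lemma M:
  assumes D: "D \<in> FR" and K: "K \<in> KS" and ab: "a \<in> D" "b \<in> D" "a \<noteq> b" "a \<in> K" "b \<in> K"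
  shows False
proof -
  have DK: "D \<in> KC" "\<not> D \<subseteq> K" using D K by (auto simp: FR_def)
  have fD: "finite D" "card D = k" using DK kcl_fin kcl_mem by auto
  have fK: "finite K" "card K = Suc k" "clique GV GE K" using K kcl_fin kcl_mem by auto
  obtain e where e: "e \<in> D" "e \<notin> K" using DK by auto
  have eab: "e \<noteq> a" "e \<noteq> b" using e ab by auto
  show False
  proof (cases "k = 2")
    case True
    have "{a, b} \<subseteq> D" using ab by auto
    moreover have "card {a, b} = card D" using True fD ab by simp
    ultimately have "{a, b} = D" using fD card_subset_eq by metis
    then show False using e ab by auto
  next
    case False
    then have k3': "k = 3" using k2 k3 by simp
    have "{a, b, e} \<subseteq> D" using ab e by auto
    moreover have "card {a, b, e} = card D" using k3' fD ab eab by simp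
    ultimately have Deq: "{a, b, e} = D" using fD card_subset_eq by metis
    have "card (K - {a, b}) = 2" using fK ab k3' by (simp add: card_Diff_subset)
    then have "K - {a, b} \<noteq> {}" by (intro notI) simp
    then obtain x where x: "x \<in> K" "x \<noteq> a" "x \<noteq> b" by blast
    define C where "C = {a, b, x}"
    have CK: "C \<subseteq> K" using x ab by (auto simp: C_def)
    have C: "C \<in> KC" unfolding kcl_mem using clique_subset[OF fK(3) CK] x ab k3'
      by (auto simp: C_def)
    have "adj C D"
      by (rule adjI[of _ _ x e]) (use x e ab eab in \<open>auto simp: C_def Deq[symmetric]\<close>)
    from L[OF K CK C DK(1) this] DK show False by simp
  qed
qed

lemma uniqK:
  assumes K: "K \<in> KS" and K': "K' \<in> KS" and C: "C \<in> KC" and CK: "C \<subseteq> K" and CK': "C \<subseteq> K'"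
  shows "K = K'"
proof -
  have fK: "finite K" "card K = Suc k" using K kcl_fin kcl_mem by auto
  have fK': "finite K'" "card K' = Suc k" "clique GV GE K'" using K' kcl_fin kcl_mem by auto
  have cC: "card C = k" "finite C" using C kcl_fin kcl_mem by auto
  have "card (K' - C) = 1" using fK' cC CK' by (simp add: card_Diff_subset)
  then obtain y where y: "K' - C = {y}" by (auto simp: card_1_singleton_iff)
  have "C \<noteq> {}" using cC k2 by auto
  then obtain c where c: "c \<in> C" by blast
  define D where "D = K' - {c}"
  have D: "D \<in> KC" unfolding kcl_mem D_def using clique_subset[OF fK'(3)] fK' c CK'
    by auto
  have "adj C D" by (rule adjI[of _ _ c y]) (use y c CK' in \<open>auto simp: D_def\<close>)
  from L[OF K CK C D this] have "D \<subseteq> K" .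
  then have "K' \<subseteq> K" using CK c y by (auto simp: D_def)
  then show ?thesis using fK fK' card_subset_eq by metis
qed

lemma KCof_eq0:
  assumes "C \<in> KC" "K \<in> KS" "C \<subseteq> K" shows "KCof C = K"
  unfolding KCof_def
proof (rule the_equality)
  show "K \<in> KS \<and> C \<subseteq> K" using assms by simp
  fix K' assume "K' \<in> KS \<and> C \<subseteq> K'"
  then show "K' = K" using uniqK[OF assms(2) _ assms(1) assms(3)] by blast
qed

lemma KCof:
  assumes "C \<in> NF" shows "KCof C \<in> KS" "C \<subseteq> KCof C"
proof -
  from assms obtain K where K: "K \<in> KS" "C \<subseteq> K" "C \<in> KC" by (auto simp: NF_def)
  have "KCof C = K" using KCof_eq0 K by blast
  then show "KCof C \<in> KS" "C \<subseteq> KCof C" using K by auto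
qed

lemmas KCof_eq = KCof_eq0

lemma KC_cases: "C \<in> KC \<Longrightarrow> C \<in> NF \<or> C \<in> FR"
  by (auto simp: NF_def FR_def)

lemma NF_KC: "C \<in> NF \<Longrightarrow> C \<in> KC" and FR_KC: "C \<in> FR \<Longrightarrow> C \<in> KC"
  by (auto simp: NF_def FR_def)

lemma NF_FR: "C \<in> NF \<Longrightarrow> C \<notin> FR"
  by (auto simp: NF_def FR_def)

lemma adj_NF:
  assumes "C \<in> NF" "D \<in> KC" "adj C D" shows "D \<in> NF" "KCof D = KCof C"
proof -
  have sub: "D \<subseteq> KCof C" using L[OF KCof[OF assms(1)] NF_KC[OF assms(1)] assms(2,3)] .
  then show "D \<in> NF" unfolding NF_def using assms(2) KCof(1)[OF assms(1)] by blast
  show "KCof D = KCof C" using KCof_eq[OF assms(2) KCof(1)[OF assms(1)] sub] .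
qed

lemma fin_NF: "C \<in> NF \<Longrightarrow> finite C" and fin_KS: "K \<in> KS \<Longrightarrow> finite K"
  using kcl_fin by (auto simp: NF_def)

lemma g_eq: "finite S \<Longrightarrow> finite S' \<Longrightarrow> g S i = g S' j \<longleftrightarrow> S = S' \<and> i = j"
  by (auto simp: g_def set_encode_eq)

lemma low: "v \<in> GV \<Longrightarrow> v < N"
proof -
  assume "v \<in> GV"
  then have "v \<le> Max (insert 0 GV)" using finGV by simp
  then show "v < N" by (simp add: N_def)
qed

lemma high: "N \<le> g S i" by (simp add: g_def)

lemma g_notGV: "g S i \<notin> GV" using low high by (meson leD)

lemma card_Z: "finite K \<Longrightarrow> card (Z K) = k - 1"
  unfolding Z_def by (subst card_image) (auto simp: inj_on_def g_eq)

lemma gk_notZ: "finite C \<Longrightarrow> finite K \<Longrightarrow> g C k \<notin> Z K"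
  unfolding Z_def by (auto simp: g_eq)

lemma phi_NF: "C \<in> NF \<Longrightarrow> phi C = insert (g C k) (Z (KCof C))"
  by (simp add: phi_def)

lemma phi_FR: "C \<in> FR \<Longrightarrow> phi C = C"
  using NF_FR by (auto simp: phi_def FR_def NF_def)

lemma phi_card: "C \<in> NF \<Longrightarrow> card (phi C) = k"
proof -
  assume C: "C \<in> NF"
  have f: "finite C" "finite (KCof C)" using C fin_NF KCof fin_KS by auto
  have "finite (Z (KCof C))" by (simp add: Z_def)
  then show ?thesis using C f card_Z gk_notZ k2 by (simp add: phi_NF)
qed

lemma phi_high: "C \<in> NF \<Longrightarrow> x \<in> phi C \<Longrightarrow> x \<notin> GV"
  by (auto simp: phi_NF Z_def g_notGV)

lemma phi_fin: "C \<in> NF \<Longrightarrow> finite (phi C)"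
  by (simp add: phi_NF Z_def)

lemma gk_in: "C \<in> NF \<Longrightarrow> C' \<in> NF \<Longrightarrow> g C k \<in> phi C' \<Longrightarrow> C = C'"
  using fin_NF KCof fin_KS by (auto simp: phi_NF Z_def g_eq)

lemma Z_in: "C \<in> NF \<Longrightarrow> K \<in> KS \<Longrightarrow> g K i \<in> phi C \<Longrightarrow> i < k - 1 \<Longrightarrow> KCof C = K"
  using fin_NF KCof fin_KS by (auto simp: phi_NF Z_def g_eq)

lemma phi_disj:
  assumes "C \<in> NF" "D \<in> NF" "KCof C \<noteq> KCof D" shows "phi C \<inter> phi D = {}"
proof -
  have f: "finite C" "finite D" "finite (KCof C)" "finite (KCof D)"
    using assms fin_NF KCof fin_KS by auto
  show ?thesis using assms f by (auto simp: phi_NF Z_def g_eq)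
qed

end


lemma two_elems: assumes "2 \<le> card Q" obtains a b where "a \<in> Q" "b \<in> Q" "a \<noteq> b"
proof -
  obtain S where "S \<subseteq> Q" "card S = 2" using obtain_subset_with_card_n[OF assms] by blast
  then show ?thesis using that by (auto simp: card_2_iff)
qed

lemma clique_mono: "clique V E Q \<Longrightarrow> E \<subseteq> E' \<Longrightarrow> clique V E' Q"
  unfolding clique_def by blast

context tjctx
begin

lemma nadj_disj: "finite A \<Longrightarrow> A \<inter> B = {} \<Longrightarrow> card A = k \<Longrightarrow> \<not> adj A B"
proof -
  assume "finite A" "A \<inter> B = {}" "card A = k"
  then have "A - B = A" by auto
  then show "\<not> adj A B" using \<open>card A = k\<close> k2 by (simp add: adj_def)
qed

lemma phi_adj:
  assumes C: "C \<in> KC" and D: "D \<in> KC"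
  shows "adj (phi C) (phi D) \<longleftrightarrow> adj C D"
proof -
  have NFFR: "adj (phi C) (phi D) \<longleftrightarrow> adj C D" if C: "C \<in> NF" and D: "D \<in> FR" for C D
  proof -
    have "phi C \<inter> phi D = {}" using phi_high[OF C] D kcl_fin[OF FR_KC[OF D]] phi_FR[OF D] by blast
    then have "\<not> adj (phi C) (phi D)" using nadj_disj phi_fin[OF C] phi_card[OF C] by blast
    moreover have "\<not> adj C D" using adj_NF(1)[OF C FR_KC[OF D]] NF_FR D by blast
    ultimately show ?thesis by simp
  qed
  show ?thesis
  proof (cases "C \<in> NF")
    case CN: True
    show ?thesis
    proof (cases "D \<in> NF")
      case DN: True
      show ?thesis
      proof (cases "KCof C = KCof D")
        case same: True
        show ?thesis
        proof (cases "C = D")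
          case True then show ?thesis by (simp add: adj_def)
        next
          case False
          have f: "finite C" "finite D" "finite (KCof C)" using CN DN fin_NF KCof fin_KS by auto
          have "g C k \<noteq> g D k" using f False g_eq by blast
          then have "phi C - phi D = {g C k}" "phi D - phi C = {g D k}"
            using same f gk_notZ by (auto simp: phi_NF[OF CN] phi_NF[OF DN])
          then have "adj (phi C) (phi D)" by (simp add: adj_def)
          moreover have "adj C D"
          proof -
            have K: "finite (KCof C)" "card (KCof C) = Suc k" using KCof(1)[OF CN] kcl_fin kcl_mem by auto
            have cc: "card C = k" "card D = k" using C D kcl_mem by auto
            show ?thesis unfolding adj_def
              using card1_diff[OF K(1) KCof(2)[OF CN] _ K(2) cc False]
                card1_diff[OF K(1) _ KCof(2)[OF CN] K(2) cc(2,1)] False KCof(2)[OF DN] same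
              by auto
          qed
          ultimately show ?thesis by simp
        qed
      next
        case diff: False
        have "\<not> adj (phi C) (phi D)" using nadj_disj phi_fin[OF CN] phi_card[OF CN]
            phi_disj[OF CN DN diff] by blast
        moreover have "\<not> adj C D" using adj_NF(2)[OF CN D] diff by auto
        ultimately show ?thesis by simp
      qed
    next
      case False
      then have "D \<in> FR" using KC_cases[OF D] by blast
      then show ?thesis using NFFR CN by blast
    qed
  next
    case CF: False
    then have CF: "C \<in> FR" using KC_cases[OF C] by blast
    show ?thesis
    proof (cases "D \<in> NF")
      case True
      then show ?thesis using NFFR[OF True CF] adj_sym by metis
    next
      case False
      then have "D \<in> FR" using KC_cases[OF D] by blast
      then show ?thesis using CF phi_FR by simp
    qed
  qed
qed

lemma pairs_mem: "a \<noteq> b \<Longrightarrow> {a, b} \<in> pairs S \<longleftrightarrow> a \<in> S \<and> b \<in> S"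
  by (auto simp: pairs_def doubleton_eq_iff)

lemma E2_edge: "a \<noteq> b \<Longrightarrow> {a, b} \<in> E2 \<longleftrightarrow> {a, b} \<in> E1 \<or> (\<exists>C\<in>NF. a \<in> phi C \<and> b \<in> phi C)"
  unfolding E2_def by (auto simp: pairs_mem)

lemma E1_GV: "{a, b} \<in> E1 \<Longrightarrow> a \<in> GV \<and> b \<in> GV"
  using edge_sub by (auto simp: E1_def)

lemma E1_GE: "E1 \<subseteq> GE" by (auto simp: E1_def)

lemma cliq2:
  assumes cl: "clique V2 E2 Q"
  shows "clique GV E1 Q \<or> (\<exists>C\<in>NF. Q \<subseteq> phi C)"
proof -
  have adjQ: "{a, b} \<in> E1 \<or> (\<exists>C\<in>NF. a \<in> phi C \<and> b \<in> phi C)"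
    if "a \<in> Q" "b \<in> Q" "a \<noteq> b" for a b
    using cl that E2_edge by (auto simp: clique_def)
  have QV: "Q \<subseteq> V2" using cl by (simp add: clique_def)
  show ?thesis
  proof (cases "Q \<subseteq> GV")
    case True
    have "clique GV E1 Q" unfolding clique_def
    proof (intro conjI ballI impI)
      show "Q \<subseteq> GV" by fact
      fix u v assume "u \<in> Q" "v \<in> Q" "u \<noteq> v"
      then show "{u, v} \<in> E1" using adjQ[of u v] True phi_high by blast
    qed
    then show ?thesis by simp
  next
    case False
    then obtain q where q: "q \<in> Q" "q \<notin> GV" by blast
    then obtain C0 where C0: "C0 \<in> NF" "q \<in> phi C0" using QV by (auto simp: V2_def)
    have hi: "\<exists>C\<in>NF. q \<in> phi C \<and> v \<in> phi C" if "v \<in> Q" "v \<noteq> q" for v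
      using adjQ[of q v] that q E1_GV by blast
    show ?thesis
    proof (cases "\<exists>C\<in>NF. g C k \<in> Q")
      case True
      then obtain C where C: "C \<in> NF" "g C k \<in> Q" by blast
      have "Q \<subseteq> phi C"
      proof
        fix v assume v: "v \<in> Q"
        show "v \<in> phi C"
        proof (cases "v = g C k")
          case True then show ?thesis using C by (simp add: phi_NF)
        next
          case False
          then obtain C' where "C' \<in> NF" "g C k \<in> phi C'" "v \<in> phi C'"
            using adjQ[of "g C k" v] C v g_notGV E1_GV by blast
          then show ?thesis using gk_in[OF C(1)] by blast
        qed
      qed
      then show ?thesis using C by blast
    next
      case nop: False
      have "q \<noteq> g C0 k" using nop q C0 by blast
      then obtain i where i: "q = g (KCof C0) i" "i < k - 1" using C0 by (auto simp: phi_NF Z_def)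
      have "Q \<subseteq> phi C0"
      proof
        fix v assume v: "v \<in> Q"
        show "v \<in> phi C0"
        proof (cases "v = q")
          case True then show ?thesis using C0 by simp
        next
          case False
          then obtain C' where C': "C' \<in> NF" "q \<in> phi C'" "v \<in> phi C'" using hi v by blast
          have "KCof C' = KCof C0" using Z_in[OF C'(1) KCof(1)[OF C0(1)]] C'(2) i by simp
          moreover have "v \<noteq> g C' k" using nop v C' by blast
          ultimately show ?thesis using C' C0 by (auto simp: phi_NF)
        qed
      qed
      then show ?thesis using C0 by blast
    qed
  qed
qed

lemma fin_KC: "finite KC"
proof -
  have "KC \<subseteq> Pow GV" using kcl_fin by auto
  then show ?thesis using finGV by (simp add: finite_subset)
qed

lemma fin_V2: "finite V2"
proof -
  have "NF \<subseteq> KC" by (auto simp: NF_def)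
  then have "finite NF" using fin_KC by (rule finite_subset)
  then have "finite (\<Union> (phi ` NF))"
    by (intro finite_Union finite_imageI) (auto intro: phi_fin)
  then show ?thesis using finGV by (simp add: V2_def)
qed

lemma cl2_card:
  assumes cl: "clique V2 E2 Q" shows "card Q \<le> k"
proof -
  from cliq2[OF cl] show ?thesis
  proof
    assume c1: "clique GV E1 Q"
    show ?thesis
    proof (rule ccontr)
      assume "\<not> card Q \<le> k"
      then have "Suc k \<le> card Q" by simp
      then obtain K where K: "K \<subseteq> Q" "card K = Suc k" by (rule obtain_subset_with_card_n)
      have clK: "clique GV E1 K" using clique_subset[OF c1 K(1)] .
      have KS: "K \<in> KS" using K clique_mono[OF clK E1_GE] by (simp add: kcl_mem)
      have "2 \<le> card K" using K k2 by simp
      then obtain a b where ab: "a \<in> K" "b \<in> K" "a \<noteq> b" by (rule two_elems)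
      have "{a, b} \<in> E1" using clK ab unfolding clique_def by blast
      then have "\<not> {a, b} \<subseteq> K" using KS unfolding E1_def by blast
      then show False using ab by blast
    qed
  next
    assume "\<exists>C\<in>NF. Q \<subseteq> phi C"
    then obtain C where "C \<in> NF" "Q \<subseteq> phi C" by blast
    then show ?thesis using card_mono[OF phi_fin[OF \<open>C \<in> NF\<close>] \<open>Q \<subseteq> phi C\<close>] phi_card[OF \<open>C \<in> NF\<close>] by simp
  qed
qed

lemma kcl2: "k_cliques k V2 E2 = FR \<union> phi ` NF"
proof
  show "k_cliques k V2 E2 \<subseteq> FR \<union> phi ` NF"
  proof
    fix Q assume Q: "Q \<in> k_cliques k V2 E2"
    then have cl: "clique V2 E2 Q" and cQ: "card Q = k" by (auto simp: k_cliques_def)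
    from cliq2[OF cl] show "Q \<in> FR \<union> phi ` NF"
    proof
      assume c1: "clique GV E1 Q"
      then have QK: "Q \<in> KC" using cQ clique_mono[OF c1 E1_GE] by (simp add: kcl_mem)
      have "Q \<notin> NF"
      proof
        assume "Q \<in> NF"
        then obtain K where K: "K \<in> KS" "Q \<subseteq> K" by (auto simp: NF_def)
        have "2 \<le> card Q" using cQ k2 by simp
        then obtain a b where ab: "a \<in> Q" "b \<in> Q" "a \<noteq> b" by (rule two_elems)
        have "{a, b} \<in> E1" using c1 ab unfolding clique_def by blast
        then have "\<not> {a, b} \<subseteq> K" using K(1) unfolding E1_def by blast
        then show False using ab K(2) by blast
      qed
      then show ?thesis using KC_cases[OF QK] by blast
    next
      assume "\<exists>C\<in>NF. Q \<subseteq> phi C"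
      then obtain C where C: "C \<in> NF" "Q \<subseteq> phi C" by blast
      then have "Q = phi C" using card_subset_eq[OF phi_fin[OF C(1)] C(2)] phi_card[OF C(1)] cQ by simp
      then show ?thesis using C by blast
    qed
  qed
next
  show "FR \<union> phi ` NF \<subseteq> k_cliques k V2 E2"
  proof
    fix Q assume "Q \<in> FR \<union> phi ` NF"
    then show "Q \<in> k_cliques k V2 E2"
    proof
      assume D: "Q \<in> FR"
      have "clique V2 E2 Q" unfolding clique_def
      proof (intro conjI ballI impI)
        show "Q \<subseteq> V2" using kcl_fin[OF FR_KC[OF D]] by (auto simp: V2_def)
        fix u v assume uv: "u \<in> Q" "v \<in> Q" "u \<noteq> v"
        have "{u, v} \<in> GE" using FR_KC[OF D] uv by (auto simp: kcl_mem clique_def)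
        moreover have "\<not> (\<exists>K\<in>KS. {u, v} \<subseteq> K)" using M[OF D _ uv(1,2,3)] by auto
        ultimately show "{u, v} \<in> E2" by (auto simp: E2_def E1_def)
      qed
      then show ?thesis using FR_KC[OF D] by (simp add: k_cliques_def kcl_mem)
    next
      assume "Q \<in> phi ` NF"
      then obtain C where C: "C \<in> NF" "Q = phi C" by blast
      have "clique V2 E2 Q" unfolding clique_def
      proof (intro conjI ballI impI)
        show "Q \<subseteq> V2" using C by (auto simp: V2_def)
        fix u v assume uv: "u \<in> Q" "v \<in> Q" "u \<noteq> v"
        then show "{u, v} \<in> E2" using E2_edge C by blast
      qed
      then show ?thesis using phi_card C by (simp add: k_cliques_def)
    qed
  qed
qed

lemma graph2: "graph V2 E2"
  unfolding graph_def
proof (intro conjI ballI)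
  show "finite V2" by (rule fin_V2)
  fix e assume "e \<in> E2"
  then show "\<exists>u v. u \<noteq> v \<and> e = {u, v} \<and> u \<in> V2 \<and> v \<in> V2"
  proof (unfold E2_def, elim UnE)
    assume "e \<in> E1"
    then have "e \<in> GE" by (simp add: E1_def)
    then obtain u v where uv: "u \<noteq> v" "e = {u, v}" "u \<in> GV" "v \<in> GV"
      using gr unfolding graph_def by blast
    then show ?thesis unfolding V2_def by blast
  next
    assume "e \<in> \<Union> (pairs ` phi ` NF)"
    then show ?thesis by (auto simp: pairs_def V2_def)
  qed
qed

lemma cn2: assumes "KC \<noteq> {}" shows "clique_number V2 E2 = k"
proof -
  have "KC = NF \<union> FR" using KC_cases NF_KC FR_KC by blast
  then have "k_cliques k V2 E2 \<noteq> {}" using assms kcl2 by auto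
  then obtain Q where "clique V2 E2 Q" "card Q = k" by (auto simp: k_cliques_def)
  then have kin: "k \<in> {card C | C. clique V2 E2 C}" by blast
  have "{card C | C. clique V2 E2 C} \<subseteq> card ` Pow V2" by (auto simp: clique_def)
  then have fin: "finite {card C | C. clique V2 E2 C}" using fin_V2 finite_subset by blast
  show ?thesis unfolding clique_number_def
    by (rule Max_eqI[OF fin _ kin]) (auto dest: cl2_card)
qed

lemma phi_bij: "bij_betw phi KC (k_cliques k V2 E2)"
proof (rule bij_betw_imageI)
  show "inj_on phi KC"
  proof
    fix C D assume C: "C \<in> KC" and D: "D \<in> KC" and eq: "phi C = phi D"
    show "C = D"
    proof (cases "C \<in> NF")
      case True
      then have "g C k \<in> phi C" by (simp add: phi_NF)
      then have gin: "g C k \<in> phi D" using eq by simp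
      show ?thesis
      proof (cases "D \<in> NF")
        case True then show ?thesis using gk_in \<open>C \<in> NF\<close> gin by blast
      next
        case False
        then have "D \<in> FR" using KC_cases[OF D] by blast
        then show ?thesis using gin phi_FR kcl_fin[OF D] g_notGV by auto
      qed
    next
      case False
      then have CF: "C \<in> FR" using KC_cases[OF C] by blast
      show ?thesis
      proof (cases "D \<in> NF")
        case True
        then have "g D k \<in> phi D" by (simp add: phi_NF)
        then have gin: "g D k \<in> phi C" using eq by simp
        then show ?thesis using gin phi_FR[OF CF] kcl_fin[OF C] g_notGV by auto
      next
        case False
        then have "D \<in> FR" using KC_cases[OF D] by blast
        then show ?thesis using eq CF phi_FR by simp
      qed
    qed
  qed
  have "KC = NF \<union> FR" using KC_cases NF_KC FR_KC by blast
  then show "phi ` KC = k_cliques k V2 E2" using kcl2 phi_FR by (auto simp: image_Un)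
qed

end


lemma k1_cliques: "k_cliques 1 V E = k_cliques 1 V {}"
  by (auto simp: k_cliques_def clique_def card_1_singleton_iff)

lemma cn_empty:
  assumes "finite V" "V \<noteq> {}" shows "clique_number V {} = 1"
proof -
  obtain x where x: "x \<in> V" using assms by blast
  have "clique V {} {x}" using x by (simp add: clique_def)
  then have kin: "1 \<in> {card C | C. clique V {} C}" by force
  have "{card C | C. clique V {} C} \<subseteq> card ` Pow V" by (auto simp: clique_def)
  then have fin: "finite {card C | C. clique V {} C}" using assms(1) finite_subset by blast
  have le: "card C \<le> 1" if "clique V {} C" for C
  proof -
    have "finite C" using that assms(1) by (auto simp: clique_def intro: finite_subset)
    moreover have "\<forall>a\<in>C. \<forall>b\<in>C. a = b" using that by (auto simp: clique_def)
    ultimately show ?thesis using card_le_Suc0_iff_eq by (metis One_nat_def)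
  qed
  show ?thesis unfolding clique_number_def
    by (rule Max_eqI[OF fin _ kin]) (auto dest: le)
qed

theorem proposition4p15:
  fixes k :: nat and V :: "'a set" and E :: "'a set set"
  assumes "1 \<le> k" and "k \<le> 3"
    and "graph V E" and "V \<noteq> {}"
    and "is_TJ_graph k V E"
    and "\<not> has_induced_diamond V E"
  shows "is_max_TJ_graph k V E"
proof -
  obtain GV :: "nat set" and GE f where gr: "graph GV GE"
    and bij: "bij_betw f V (k_cliques k GV GE)"
    and iso: "\<forall>u\<in>V. \<forall>v\<in>V. {u, v} \<in> E \<longleftrightarrow> {f u, f v} \<in> TJ_edges k GV GE"
    using assms(5) unfolding is_TJ_graph_def graph_iso_def TJ_vertices_def by blast
  obtain v0 where "v0 \<in> V" using assms(4) by blast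
  then have "f v0 \<in> k_cliques k GV GE" using bij by (auto simp: bij_betw_def)
  then have KCne: "k_cliques k GV GE \<noteq> {}" by blast
  show ?thesis
  proof (cases "k = 1")
    case True
    have fin: "finite GV" using gr by (simp add: graph_def)
    obtain C where "C \<in> k_cliques k GV GE" using KCne by blast
    then have "GV \<noteq> {}" using True by (auto simp: k_cliques_def clique_def)
    then have cn: "clique_number GV {} = k" using cn_empty fin True by simp
    have g0: "graph GV {}" using fin by (simp add: graph_def)
    have kc: "k_cliques k GV {} = k_cliques k GV GE" using True k1_cliques by metis
    have te: "TJ_edges k GV {} = TJ_edges k GV GE" unfolding TJ_edges_def kc ..
    show ?thesis unfolding is_max_TJ_graph_def graph_iso_def TJ_vertices_def
      using g0 cn bij iso kc te by metis
  next
    case False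
    then have k2: "2 \<le> k" using assms(1) by simp
    have TJe: "{C, D} \<in> TJ_edges k GV GE \<longleftrightarrow> adj C D"
      if "C \<in> k_cliques k GV GE" "D \<in> k_cliques k GV GE" for C D
      using TJ_edges_iff[OF that] .
    interpret T: tjctx GV GE k
    proof
      show "graph GV GE" by fact
      show "2 \<le> k" by fact
      show "k \<le> 3" by fact
      fix a b c d
      assume abcd: "a \<in> k_cliques k GV GE" "b \<in> k_cliques k GV GE" "c \<in> k_cliques k GV GE"
        "d \<in> k_cliques k GV GE" and dist: "distinct [a, b, c, d]"
        and ad: "adj a b" "adj a c" "adj a d" "adj b c" "adj b d"
      define h where "h = inv_into V f"
      have hV: "h x \<in> V" if "x \<in> k_cliques k GV GE" for x
        using that bij unfolding h_def bij_betw_def by (metis inv_into_into)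
      have fh: "f (h x) = x" if "x \<in> k_cliques k GV GE" for x
        using that bij unfolding h_def by (simp add: bij_betw_inv_into_right)
      have eq: "{h x, h y} \<in> E \<longleftrightarrow> adj x y"
        if "x \<in> k_cliques k GV GE" "y \<in> k_cliques k GV GE" for x y
      proof -
        have "{h x, h y} \<in> E \<longleftrightarrow> {f (h x), f (h y)} \<in> TJ_edges k GV GE"
          using iso hV[OF that(1)] hV[OF that(2)] by blast
        then show ?thesis using fh[OF that(1)] fh[OF that(2)] TJe[OF that] by simp
      qed
      have dh: "distinct [h a, h b, h c, h d]"
        using dist fh[OF abcd(1)] fh[OF abcd(2)] fh[OF abcd(3)] fh[OF abcd(4)]
        by (simp, metis)
      show "adj c d"
      proof (rule ccontr)
        assume "\<not> adj c d"
        have e1: "{h a, h b} \<in> E" "{h a, h c} \<in> E" "{h a, h d} \<in> E"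
          "{h b, h c} \<in> E" "{h b, h d} \<in> E" "{h c, h d} \<notin> E"
          using eq[OF abcd(1) abcd(2)] eq[OF abcd(1) abcd(3)] eq[OF abcd(1) abcd(4)]
            eq[OF abcd(2) abcd(3)] eq[OF abcd(2) abcd(4)] eq[OF abcd(3) abcd(4)] ad \<open>\<not> adj c d\<close>
          by simp_all
        have "has_induced_diamond V E"
          unfolding has_induced_diamond_def
          apply (rule exI[of _ "h a"], rule exI[of _ "h b"], rule exI[of _ "h c"], rule exI[of _ "h d"])
          using hV[OF abcd(1)] hV[OF abcd(2)] hV[OF abcd(3)] hV[OF abcd(4)] dh e1
          by simp
        then show False using assms(6) by simp
      qed
    qed
    have b2: "bij_betw (T.phi \<circ> f) V (k_cliques k T.V2 T.E2)"
      using bij T.phi_bij by (rule bij_betw_trans)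
    have fin2: "f u \<in> k_cliques k GV GE" if "u \<in> V" for u
      using bij that by (auto simp: bij_betw_def)
    have phin: "T.phi (f u) \<in> k_cliques k T.V2 T.E2" if "u \<in> V" for u
      using b2 that by (auto simp: bij_betw_def)
    have "\<forall>u\<in>V. \<forall>v\<in>V. {u, v} \<in> E \<longleftrightarrow> {(T.phi \<circ> f) u, (T.phi \<circ> f) v} \<in> TJ_edges k T.V2 T.E2"
    proof (intro ballI)
      fix u v assume u: "u \<in> V" and v: "v \<in> V"
      have "{u, v} \<in> E \<longleftrightarrow> adj (f u) (f v)" using iso u v TJe[OF fin2[OF u] fin2[OF v]] by simp
      also have "\<dots> \<longleftrightarrow> adj (T.phi (f u)) (T.phi (f v))" using T.phi_adj[OF fin2[OF u] fin2[OF v]] by simp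
      also have "\<dots> \<longleftrightarrow> {T.phi (f u), T.phi (f v)} \<in> TJ_edges k T.V2 T.E2"
        using TJ_edges_iff[OF phin[OF u] phin[OF v]] by simp
      finally show "{u, v} \<in> E \<longleftrightarrow> {(T.phi \<circ> f) u, (T.phi \<circ> f) v} \<in> TJ_edges k T.V2 T.E2" by simp
    qed
    then show ?thesis unfolding is_max_TJ_graph_def graph_iso_def TJ_vertices_def
      using T.graph2 T.cn2[OF KCne] b2 by blast
  qed
qed


end
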